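(* Let $V\subsetneq\mathbb{C}$ be a domain. Let $f(z)=a+\sum_{n=1}^{\infty}a_nz^n$ be an analytic function from the unit disc $\mathbb{D}$ into $V$. Assume $f$ is B-proper, that is, for almost every $\theta\in[0,2\pi)$ the limit $\lim_{r\nearrow1}f(re^{i\theta})$ exists and lies in $\partial V$. Suppose $u_V$ is a continuous function on $V$ satisfying: (i) $\Delta u_V=-4$ on $V$; (ii) $u_V$ extends continuously to $\partial V$, with $u_V=0$ on $\partial V$; (iii) there is a constant $C>0$ with $0\le u_V(w)\le C|w|^2+C$ for all $w\in V$. Then $u_V(a)=\sum_{n=1}^{\infty}|a_n|^2$. *)

theory Defs
  imports "HOL-Analysis.Analysis"
begin

text \<open>Directional (partial) derivative of a real-valued function on the complex plane
  (identified with R^2) in direction e; e = 1 gives d/dx, e = i gives d/dy.\<close>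
definition dir_deriv :: "complex \<Rightarrow> (complex \<Rightarrow> real) \<Rightarrow> complex \<Rightarrow> real" where
  "dir_deriv e u z = deriv (\<lambda>t::real. u (z + complex_of_real t * e)) 0"

definition dir_differentiable :: "complex \<Rightarrow> (complex \<Rightarrow> real) \<Rightarrow> complex \<Rightarrow> bool" where
  "dir_differentiable e u z \<longleftrightarrow> (\<lambda>t::real. u (z + complex_of_real t * e)) differentiable (at 0)"

definition C2_on :: "complex set \<Rightarrow> (complex \<Rightarrow> real) \<Rightarrow> bool" where
  "C2_on V u \<longleftrightarrow> continuous_on V u \<and>
     (\<forall>e\<in>{1, \<i>}. (\<forall>z\<in>V. dir_differentiable e u z) \<and> continuous_on V (dir_deriv e u) \<and>
        (\<forall>e'\<in>{1, \<i>}. (\<forall>z\<in>V. dir_differentiable e' (dir_deriv e u) z) \<and>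
                       continuous_on V (dir_deriv e' (dir_deriv e u))))"

definition laplacian :: "(complex \<Rightarrow> real) \<Rightarrow> complex \<Rightarrow> real" where
  "laplacian u z = dir_deriv 1 (dir_deriv 1 u) z + dir_deriv \<i> (dir_deriv \<i> u) z"

end

theory Submission
  imports Defs "HOL-Complex_Analysis.Complex_Analysis" "HOL-Real_Asymp.Real_Asymp"
begin


lemma dd_has:
  assumes "dir_differentiable e u (z + of_real t0 * e)"
  shows "((\<lambda>t. u (z + of_real t * e)) has_real_derivative dir_deriv e u (z + of_real t0 * e)) (at t0)"
proof -
  define g where "g = (\<lambda>s::real. u (z + of_real t0 * e + of_real s * e))"
  have "(g has_real_derivative deriv g 0) (at 0)"
    using assms unfolding dir_differentiable_def g_def
    by (simp add: DERIV_deriv_iff_real_differentiable)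
  hence "(g has_real_derivative deriv g 0) (at (t0 + - t0))" by simp
  hence "((\<lambda>x. g (x + - t0)) has_real_derivative deriv g 0) (at t0)"
    by (rule DERIV_shift[THEN iffD1])
  moreover have "(\<lambda>x. g (x + - t0)) = (\<lambda>t. u (z + of_real t * e))"
    unfolding g_def by (rule ext) (simp add: algebra_simps)
  moreover have "deriv g 0 = dir_deriv e u (z + of_real t0 * e)"
    unfolding g_def dir_deriv_def by simp
  ultimately show ?thesis by simp
qed



lemma sq_in_ball:
  assumes "0 \<le> s" "s \<le> h" "0 \<le> t" "t \<le> h" "3 * h = d" "h > 0"
  shows "z + of_real s + of_real t * \<i> \<in> ball z d"
proof -
  have "norm (of_real s + of_real t * \<i>) \<le> norm (of_real s :: complex) + norm (of_real t * \<i>)"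
    by (rule norm_triangle_ineq)
  also have "\<dots> = s + t" using assms by (simp add: norm_mult)
  finally have n: "norm (of_real s + of_real t * \<i>) < d" using assms by simp
  have "dist z (z + (of_real s + of_real t * \<i>)) = norm (of_real s + of_real t * \<i>)"
    by (metis add_diff_cancel_left' dist_commute dist_norm)
  thus ?thesis using n by (simp add: add.assoc)
qed

lemma clairaut:
  fixes u :: "complex \<Rightarrow> real"
  assumes V: "open V" "z \<in> V"
    and dx: "\<forall>w\<in>V. dir_differentiable 1 u w" and dy: "\<forall>w\<in>V. dir_differentiable \<i> u w"
    and dxy: "\<forall>w\<in>V. dir_differentiable \<i> (dir_deriv 1 u) w"
    and dyx: "\<forall>w\<in>V. dir_differentiable 1 (dir_deriv \<i> u) w"
    and cxy: "continuous_on V (dir_deriv \<i> (dir_deriv 1 u))"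
    and cyx: "continuous_on V (dir_deriv 1 (dir_deriv \<i> u))"
  shows "dir_deriv \<i> (dir_deriv 1 u) z = dir_deriv 1 (dir_deriv \<i> u) z"
proof (rule ccontr)
  define ux where "ux = dir_deriv 1 u"
  define uy where "uy = dir_deriv \<i> u"
  define A where "A = dir_deriv \<i> ux z"
  define B where "B = dir_deriv 1 uy z"
  assume "dir_deriv \<i> (dir_deriv 1 u) z \<noteq> dir_deriv 1 (dir_deriv \<i> u) z"
  hence AB: "A \<noteq> B" by (simp add: A_def B_def ux_def uy_def)
  define \<epsilon> where "\<epsilon> = \<bar>A - B\<bar> / 2"
  have ep: "\<epsilon> > 0" using AB by (simp add: \<epsilon>_def)
  obtain d1 where d1: "d1 > 0" "\<forall>w\<in>V. dist w z < d1 \<longrightarrow> dist (dir_deriv \<i> ux w) A < \<epsilon>"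
    using cxy V ep unfolding continuous_on_iff A_def ux_def by blast
  obtain d2 where d2: "d2 > 0" "\<forall>w\<in>V. dist w z < d2 \<longrightarrow> dist (dir_deriv 1 uy w) B < \<epsilon>"
    using cyx V ep unfolding continuous_on_iff B_def uy_def by blast
  obtain d3 where d3: "d3 > 0" "ball z d3 \<subseteq> V" using V open_contains_ball by blast
  define d where "d = min d1 (min d2 d3)"
  have d: "d > 0" "ball z d \<subseteq> V" using d1 d2 d3 by (auto simp: d_def)
  define h where "h = d / 3"
  have h: "h > 0" "3 * h = d" using d by (auto simp: h_def)
  have inV: "z + of_real s + of_real t * \<i> \<in> V" if "0 \<le> s" "s \<le> h" "0 \<le> t" "t \<le> h" for s t
    using sq_in_ball[OF that h(2) h(1)] d by auto
  have inB: "dist (z + of_real s + of_real t * \<i>) z < d" if "0 \<le> s" "s \<le> h" "0 \<le> t" "t \<le> h" for s t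
    using sq_in_ball[OF that h(2) h(1), of z] by (simp add: dist_commute)
  define \<Delta> where "\<Delta> = u (z + of_real h + of_real h * \<i>) - u (z + of_real h) - u (z + of_real h * \<i>) + u z"
  obtain w1 where w1: "dist w1 z < d" "w1 \<in> V" "\<Delta> = h * h * dir_deriv \<i> ux w1"
  proof -
    define \<phi> where "\<phi> = (\<lambda>s. u (z + of_real h * \<i> + of_real s * 1) - u (z + of_real s * 1))"
    define \<phi>' where "\<phi>' = (\<lambda>s. ux (z + of_real h * \<i> + of_real s * 1) - ux (z + of_real s * 1))"
    have "\<exists>\<xi>. 0 < \<xi> \<and> \<xi> < h \<and> \<phi> h - \<phi> 0 = (h - 0) * \<phi>' \<xi>"
    proof (rule MVT2[OF h(1)])
      fix x assume x: "0 \<le> x" "x \<le> h"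
      have m1: "z + of_real h * \<i> + of_real x * 1 \<in> V" using inV[of x h] x h by (simp add: algebra_simps)
      have m2: "z + of_real x * 1 \<in> V" using inV[of x 0] x h by simp
      show "DERIV \<phi> x :> \<phi>' x" unfolding \<phi>_def \<phi>'_def ux_def
        by (intro DERIV_diff dd_has) (use m1 m2 dx in auto)
    qed
    then obtain \<xi> where \<xi>: "0 < \<xi>" "\<xi> < h" "\<phi> h - \<phi> 0 = h * \<phi>' \<xi>" by auto
    define \<psi> where "\<psi> = (\<lambda>t. ux (z + of_real \<xi> + of_real t * \<i>))"
    define \<psi>' where "\<psi>' = (\<lambda>t. dir_deriv \<i> ux (z + of_real \<xi> + of_real t * \<i>))"
    have "\<exists>\<eta>. 0 < \<eta> \<and> \<eta> < h \<and> \<psi> h - \<psi> 0 = (h - 0) * \<psi>' \<eta>"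
    proof (rule MVT2[OF h(1)])
      fix x assume x: "0 \<le> x" "x \<le> h"
      have m1: "z + of_real \<xi> + of_real x * \<i> \<in> V" using inV[of \<xi> x] x \<xi> by simp
      show "DERIV \<psi> x :> \<psi>' x" unfolding \<psi>_def \<psi>'_def
        by (intro dd_has) (use m1 dxy in \<open>auto simp: ux_def\<close>)
    qed
    then obtain \<eta> where \<eta>: "0 < \<eta>" "\<eta> < h" "\<psi> h - \<psi> 0 = h * \<psi>' \<eta>" by auto
    have "\<Delta> = \<phi> h - \<phi> 0" unfolding \<Delta>_def \<phi>_def by (simp add: algebra_simps)
    also have "\<dots> = h * (\<psi> h - \<psi> 0)" using \<xi> unfolding \<phi>'_def \<psi>_def by (simp add: algebra_simps)
    also have "\<dots> = h * h * \<psi>' \<eta>" using \<eta> by simp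
    finally show ?thesis
      using that[of "z + of_real \<xi> + of_real \<eta> * \<i>"] inV[of \<xi> \<eta>] inB[of \<xi> \<eta>] \<xi> \<eta> unfolding \<psi>'_def by auto
  qed
  obtain w2 where w2: "dist w2 z < d" "w2 \<in> V" "\<Delta> = h * h * dir_deriv 1 uy w2"
  proof -
    define \<phi> where "\<phi> = (\<lambda>t. u (z + of_real h + of_real t * \<i>) - u (z + of_real t * \<i>))"
    define \<phi>' where "\<phi>' = (\<lambda>t. uy (z + of_real h + of_real t * \<i>) - uy (z + of_real t * \<i>))"
    have "\<exists>\<xi>. 0 < \<xi> \<and> \<xi> < h \<and> \<phi> h - \<phi> 0 = (h - 0) * \<phi>' \<xi>"
    proof (rule MVT2[OF h(1)])
      fix x assume x: "0 \<le> x" "x \<le> h"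
      have m1: "z + of_real h + of_real x * \<i> \<in> V" using inV[of h x] x h by simp
      have m2: "z + of_real x * \<i> \<in> V" using inV[of 0 x] x h by simp
      show "DERIV \<phi> x :> \<phi>' x" unfolding \<phi>_def \<phi>'_def uy_def
        by (intro DERIV_diff dd_has) (use m1 m2 dy in auto)
    qed
    then obtain \<eta> where \<eta>: "0 < \<eta>" "\<eta> < h" "\<phi> h - \<phi> 0 = h * \<phi>' \<eta>" by auto
    define \<psi> where "\<psi> = (\<lambda>s. uy (z + of_real \<eta> * \<i> + of_real s * 1))"
    define \<psi>' where "\<psi>' = (\<lambda>s. dir_deriv 1 uy (z + of_real \<eta> * \<i> + of_real s * 1))"
    have "\<exists>\<xi>. 0 < \<xi> \<and> \<xi> < h \<and> \<psi> h - \<psi> 0 = (h - 0) * \<psi>' \<xi>"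
    proof (rule MVT2[OF h(1)])
      fix x assume x: "0 \<le> x" "x \<le> h"
      have m1: "z + of_real \<eta> * \<i> + of_real x * 1 \<in> V" using inV[of x \<eta>] x \<eta> by (simp add: algebra_simps)
      show "DERIV \<psi> x :> \<psi>' x" unfolding \<psi>_def \<psi>'_def
        by (intro dd_has) (use m1 dyx in \<open>auto simp: uy_def\<close>)
    qed
    then obtain \<xi> where \<xi>: "0 < \<xi>" "\<xi> < h" "\<psi> h - \<psi> 0 = h * \<psi>' \<xi>" by auto
    have "\<Delta> = \<phi> h - \<phi> 0" unfolding \<Delta>_def \<phi>_def by (simp add: algebra_simps)
    also have "\<dots> = h * (\<psi> h - \<psi> 0)" using \<eta> unfolding \<phi>'_def \<psi>_def by (simp add: algebra_simps)
    also have "\<dots> = h * h * \<psi>' \<xi>" using \<xi> by simp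
    finally have "\<Delta> = h * h * dir_deriv 1 uy (z + of_real \<xi> + of_real \<eta> * \<i>)"
      unfolding \<psi>'_def by (simp add: algebra_simps)
    thus ?thesis
      using that[of "z + of_real \<xi> + of_real \<eta> * \<i>"] inV[of \<xi> \<eta>] inB[of \<xi> \<eta>] \<xi> \<eta> by auto
  qed
  have "dir_deriv \<i> ux w1 = dir_deriv 1 uy w2" using w1 w2 h by simp
  moreover have "dist (dir_deriv \<i> ux w1) A < \<epsilon>" using d1 w1 by (auto simp: d_def)
  moreover have "dist (dir_deriv 1 uy w2) B < \<epsilon>" using d2 w2 by (auto simp: d_def)
  ultimately show False unfolding \<epsilon>_def dist_real_def by (auto simp: abs_less_iff abs_if split: if_split_asm)
qed



lemma frechet_partials:
  fixes \<phi> :: "complex \<Rightarrow> real"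
  assumes V: "open V" "z \<in> V"
    and dx: "\<forall>w\<in>V. dir_differentiable 1 \<phi> w" and dy: "\<forall>w\<in>V. dir_differentiable \<i> \<phi> w"
    and cy: "continuous_on V (dir_deriv \<i> \<phi>)"
  shows "(\<phi> has_derivative (\<lambda>k. dir_deriv 1 \<phi> z * Re k + dir_deriv \<i> \<phi> z * Im k)) (at z)"
proof -
  obtain d where d: "d > 0" "ball z d \<subseteq> V" using V open_contains_ball by blast
  define x0 where "x0 = Re z"
  define y0 where "y0 = Im z"
  define X where "X = ball x0 (d/2)"
  define Y where "Y = ball y0 (d/2)"
  define f where "f = (\<lambda>x y. \<phi> (Complex x y))"
  have CinV: "Complex x y \<in> V" if "x \<in> X" "y \<in> Y" for x y
  proof -
    have "dist z (Complex x y) \<le> dist x0 x + dist y0 y"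
      by (simp add: dist_norm cmod_def x0_def y0_def real_sqrt_sum_squares_triangle_ineq
          sqrt_sum_squares_le_sum_abs)
    also have "\<dots> < d" using that by (simp add: X_def Y_def)
    finally show ?thesis using d by auto
  qed
  have Ceq: "Complex x y = of_real y * \<i> + of_real x * 1" "Complex x y = of_real x + of_real y * \<i>" for x y
    by (simp_all add: Complex_eq)
  have zeq: "complex_of_real (Im z) * \<i> + complex_of_real (Re z) = z" by (simp add: complex_eq_iff)
  have fx: "((\<lambda>x. f x y0) has_derivative (\<lambda>t. t * dir_deriv 1 \<phi> z)) (at x0 within X)"
  proof -
    have "((\<lambda>t. \<phi> (of_real y0 * \<i> + of_real t * 1)) has_real_derivative
        dir_deriv 1 \<phi> (of_real y0 * \<i> + of_real x0 * 1)) (at x0)"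
      by (rule dd_has) (use dx V in \<open>simp add: x0_def y0_def zeq\<close>)
    hence "((\<lambda>x. f x y0) has_real_derivative dir_deriv 1 \<phi> z) (at x0)"
      unfolding f_def using Ceq(1)[of _ "Im z"] by (simp add: x0_def y0_def zeq)
    moreover have "(\<lambda>t. t * dir_deriv 1 \<phi> z) = (*) (dir_deriv 1 \<phi> z)" by (auto simp: fun_eq_iff)
    ultimately show ?thesis
      by (simp add: has_field_derivative_def has_derivative_at_withinI)
  qed
  have fy: "((\<lambda>y. f x y) has_derivative blinfun_apply (blinfun_scaleR_left (dir_deriv \<i> \<phi> (Complex x y)))) (at y within Y)"
    if "x \<in> X" "y \<in> Y" for x y
  proof -
    have "((\<lambda>t. \<phi> (of_real x + of_real t * \<i>)) has_real_derivative
        dir_deriv \<i> \<phi> (of_real x + of_real y * \<i>)) (at y)"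
      by (rule dd_has) (use dy CinV[OF that] in \<open>simp add: Ceq(2)[symmetric]\<close>)
    hence "((\<lambda>y. f x y) has_real_derivative dir_deriv \<i> \<phi> (Complex x y)) (at y)"
      unfolding f_def by (simp add: Ceq(2)[symmetric])
    moreover have "blinfun_apply (blinfun_scaleR_left (dir_deriv \<i> \<phi> (Complex x y))) = (*) (dir_deriv \<i> \<phi> (Complex x y))"
      by (auto simp: fun_eq_iff)
    ultimately show ?thesis
      by (simp add: has_field_derivative_def has_derivative_at_withinI)
  qed
  have cont: "continuous (at (x0, y0) within X \<times> Y) (\<lambda>(x, y). blinfun_scaleR_left (dir_deriv \<i> \<phi> (Complex x y)))"
  proof -
    have "isCont (dir_deriv \<i> \<phi>) z" using cy V continuous_on_eq_continuous_at by blast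
    hence "isCont (dir_deriv \<i> \<phi>) (Complex (fst (x0,y0)) (snd (x0,y0)))" by (simp add: x0_def y0_def)
    hence "isCont (\<lambda>p. dir_deriv \<i> \<phi> (Complex (fst p) (snd p))) (x0, y0)"
    proof -
      have c1: "isCont (\<lambda>p. Complex (fst p) (snd p)) (x0, y0)"
        unfolding isCont_def by (intro tendsto_Complex tendsto_fst tendsto_snd tendsto_ident_at)
      show ?thesis using isCont_o2[OF c1 \<open>isCont (dir_deriv \<i> \<phi>) (Complex (fst (x0,y0)) (snd (x0,y0)))\<close>] by simp
    qed
    hence "isCont (\<lambda>p. blinfun_scaleR_left (dir_deriv \<i> \<phi> (Complex (fst p) (snd p)))) (x0, y0)"
      by (rule bounded_linear.isCont[OF bounded_linear_blinfun_scaleR_left])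
    moreover have "(\<lambda>(x, y). blinfun_scaleR_left (dir_deriv \<i> \<phi> (Complex x y))) = (\<lambda>p. blinfun_scaleR_left (dir_deriv \<i> \<phi> (Complex (fst p) (snd p))))"
      by (auto simp: fun_eq_iff)
    ultimately show ?thesis using continuous_at_imp_continuous_at_within by metis
  qed
  have "((\<lambda>(x, y). f x y) has_derivative (\<lambda>(tx, ty). tx * dir_deriv 1 \<phi> z + blinfun_scaleR_left (dir_deriv \<i> \<phi> (Complex x0 y0)) ty))
     (at (x0, y0) within X \<times> Y)"
    by (rule has_derivative_partialsI[OF fx fy cont]) (auto simp: Y_def d)
  moreover have "at (x0, y0) within X \<times> Y = at (x0, y0)"
    by (rule at_within_open) (auto simp: X_def Y_def d open_Times)
  ultimately have D: "((\<lambda>(x, y). f x y) has_derivative (\<lambda>(tx, ty). tx * dir_deriv 1 \<phi> z + ty * dir_deriv \<i> \<phi> z))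
     (at (x0, y0))" by (simp add: x0_def y0_def)
  have P: "((\<lambda>w. (Re w, Im w)) has_derivative (\<lambda>w. (Re w, Im w))) (at z)"
    by (intro has_derivative_Pair has_derivative_Re has_derivative_Im has_derivative_ident)
  have "((\<lambda>(x, y). f x y) \<circ> (\<lambda>w. (Re w, Im w)) has_derivative
     (\<lambda>(tx, ty). tx * dir_deriv 1 \<phi> z + ty * dir_deriv \<i> \<phi> z) \<circ> (\<lambda>w. (Re w, Im w))) (at z)"
    by (rule diff_chain_at[OF P]) (use D in \<open>simp add: x0_def y0_def\<close>)
  thus ?thesis by (simp add: f_def o_def mult.commute)
qed



lemma conj_exists:
  fixes u :: "complex \<Rightarrow> real" and f :: "complex \<Rightarrow> complex"
  assumes V: "open V" and C2: "C2_on V u" and lap: "\<And>w. w \<in> V \<Longrightarrow> laplacian u w = -4"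
    and holf: "f holomorphic_on ball 0 1" and into: "f ` ball 0 1 \<subseteq> V"
  shows "\<exists>G c. G holomorphic_on ball 0 1 \<and> (\<forall>z\<in>ball 0 1. u (f z) + (cmod (f z))\<^sup>2 = Re (G z) + c)"
proof -
  define ux where "ux = dir_deriv 1 u"
  define uy where "uy = dir_deriv \<i> u"
  have c2: "\<forall>w\<in>V. dir_differentiable 1 u w" "\<forall>w\<in>V. dir_differentiable \<i> u w"
    "continuous_on V ux" "continuous_on V uy"
    "\<forall>w\<in>V. dir_differentiable 1 ux w" "\<forall>w\<in>V. dir_differentiable \<i> ux w"
    "\<forall>w\<in>V. dir_differentiable 1 uy w" "\<forall>w\<in>V. dir_differentiable \<i> uy w"
    "continuous_on V (dir_deriv 1 ux)" "continuous_on V (dir_deriv \<i> ux)"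
    "continuous_on V (dir_deriv 1 uy)" "continuous_on V (dir_deriv \<i> uy)"
    using C2 unfolding C2_on_def ux_def uy_def by auto
  define g where "g = (\<lambda>w. complex_of_real (ux w + 2 * Re w) + \<i> * complex_of_real (- (uy w + 2 * Im w)))"
  have gd: "(g has_field_derivative (complex_of_real (dir_deriv 1 ux w + 2) - \<i> * complex_of_real (dir_deriv 1 uy w))) (at w)"
    if w: "w \<in> V" for w
  proof -
    have Dx: "(ux has_derivative (\<lambda>k. dir_deriv 1 ux w * Re k + dir_deriv \<i> ux w * Im k)) (at w)"
      by (rule frechet_partials[OF V w]) (use c2 in auto)
    have Dy: "(uy has_derivative (\<lambda>k. dir_deriv 1 uy w * Re k + dir_deriv \<i> uy w * Im k)) (at w)"
      by (rule frechet_partials[OF V w]) (use c2 in auto)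
    have sym: "dir_deriv \<i> ux w = dir_deriv 1 uy w"
      unfolding ux_def uy_def by (rule clairaut[OF V w]) (use c2 in \<open>auto simp: ux_def uy_def\<close>)
    have l: "dir_deriv 1 ux w + dir_deriv \<i> uy w = -4"
      using lap[OF w] by (simp add: laplacian_def ux_def uy_def)
    have "(g has_derivative (\<lambda>k. complex_of_real ((dir_deriv 1 ux w * Re k + dir_deriv \<i> ux w * Im k) + 2 * Re k)
       + \<i> * complex_of_real (- ((dir_deriv 1 uy w * Re k + dir_deriv \<i> uy w * Im k) + 2 * Im k)))) (at w)"
      unfolding g_def
      by (intro derivative_intros Dx Dy has_derivative_Re has_derivative_Im has_derivative_ident)
    moreover have "(\<lambda>k. complex_of_real ((dir_deriv 1 ux w * Re k + dir_deriv \<i> ux w * Im k) + 2 * Re k)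
       + \<i> * complex_of_real (- ((dir_deriv 1 uy w * Re k + dir_deriv \<i> uy w * Im k) + 2 * Im k)))
       = (*) (complex_of_real (dir_deriv 1 ux w + 2) - \<i> * complex_of_real (dir_deriv 1 uy w))"
    proof -
      have l': "dir_deriv \<i> uy w = -4 - dir_deriv 1 ux w" using l by simp
      show ?thesis using sym by (auto simp: l' fun_eq_iff complex_eq_iff algebra_simps)
    qed
    ultimately show ?thesis by (simp add: has_field_derivative_def)
  qed
  have holg: "g holomorphic_on V"
    using gd V by (auto simp: holomorphic_on_def field_differentiable_def at_within_open[OF _ V]
        intro: has_field_derivative_at_within)
  define v where "v = (\<lambda>w. u w + (cmod w)\<^sup>2)"
  have vd: "(v has_derivative (\<lambda>k. Re (g w * k))) (at w)" if w: "w \<in> V" for w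
  proof -
    have Du: "(u has_derivative (\<lambda>k. ux w * Re k + uy w * Im k)) (at w)"
      unfolding ux_def uy_def by (rule frechet_partials[OF V w]) (use c2 in \<open>auto simp: uy_def\<close>)
    have v_eq: "v = (\<lambda>w. u w + (Re w * Re w + Im w * Im w))"
      by (auto simp: v_def fun_eq_iff cmod_power2 simp flip: power2_eq_square)
    have "(v has_derivative (\<lambda>k. (ux w * Re k + uy w * Im k) + ((Re w * Re k + Re k * Re w) + (Im w * Im k + Im k * Im w)))) (at w)"
      unfolding v_eq
    proof (rule has_derivative_add[OF Du has_derivative_add])
      have r: "((\<lambda>x. Re x) has_derivative (\<lambda>h. Re h)) (at w)"
        by (rule has_derivative_Re[OF has_derivative_ident])
      have i: "((\<lambda>x. Im x) has_derivative (\<lambda>h. Im h)) (at w)"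
        by (rule has_derivative_Im[OF has_derivative_ident])
      show "((\<lambda>x. Re x * Re x) has_derivative (\<lambda>k. Re w * Re k + Re k * Re w)) (at w)"
        by (rule has_derivative_mult[OF r r])
      show "((\<lambda>x. Im x * Im x) has_derivative (\<lambda>k. Im w * Im k + Im k * Im w)) (at w)"
        by (rule has_derivative_mult[OF i i])
    qed
    moreover have "(\<lambda>k. (ux w * Re k + uy w * Im k) + ((Re w * Re k + Re k * Re w) + (Im w * Im k + Im k * Im w))) = (\<lambda>k. Re (g w * k))"
    proof (rule ext)
      fix k
      have e: "Re (g w * k) = (ux w + 2 * Re w) * Re k + (uy w + 2 * Im w) * Im k"
        by (simp add: g_def) algebra
      show "(ux w * Re k + uy w * Im k) + ((Re w * Re k + Re k * Re w) + (Im w * Im k + Im k * Im w)) = Re (g w * k)"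
        unfolding e by algebra
    qed
    ultimately show ?thesis by simp
  qed
  define H where "H = (\<lambda>z. g (f z) * deriv f z)"
  have holH: "H holomorphic_on ball 0 1"
  proof -
    have h1: "(\<lambda>z. g (f z)) holomorphic_on ball 0 1"
      using holomorphic_on_compose_gen[OF holf holg into] unfolding comp_def .
    have h2: "deriv f holomorphic_on ball 0 1" by (rule holomorphic_deriv[OF holf open_ball])
    show ?thesis unfolding H_def by (rule holomorphic_on_mult[OF h1 h2])
  qed
  obtain G where G: "\<And>x. x \<in> ball 0 1 \<Longrightarrow> (G has_field_derivative H x) (at x within ball 0 1)"
  proof (rule holomorphic_convex_primitive'[OF convex_ball open_ball holH])
    fix G0 assume "\<And>x. x \<in> ball 0 1 \<Longrightarrow> (G0 has_field_derivative H x) (at x within ball 0 1)"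
    thus thesis by (rule that)
  qed
  have G': "(G has_field_derivative H x) (at x)" if "x \<in> ball 0 1" for x
    using G[OF that] unfolding at_within_open[OF that open_ball] .
  have holG: "G holomorphic_on ball 0 1"
    unfolding holomorphic_on_def field_differentiable_def
  proof
    fix x :: complex assume x: "x \<in> ball 0 1"
    show "\<exists>f'. (G has_field_derivative f') (at x within ball 0 1)" using G[OF x] by (rule exI)
  qed
  have "\<exists>c. \<forall>z\<in>ball 0 1. (\<lambda>z. Re (G z) - v (f z)) z = c"
  proof (rule has_derivative_zero_constant[OF convex_ball, where f="\<lambda>z. Re (G z) - v (f z)"])
    fix z :: complex assume z: "z \<in> ball 0 1"
    have fz: "f z \<in> V" using into z by auto
    have df: "(f has_derivative (*) (deriv f z)) (at z)"
      using holomorphic_derivI[OF holf open_ball z, of UNIV] by (simp add: has_field_derivative_def)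
    have d1: "((\<lambda>z. v (f z)) has_derivative (\<lambda>k. Re (g (f z) * (deriv f z * k)))) (at z)"
      using has_derivative_compose[OF df vd[OF fz]] by simp
    have d2: "((\<lambda>z. Re (G z)) has_derivative (\<lambda>k. Re (H z * k))) (at z)"
      using has_derivative_Re[OF G'[OF z, unfolded has_field_derivative_def]] by simp
    have "((\<lambda>z. Re (G z) - v (f z)) has_derivative (\<lambda>k. Re (H z * k) - Re (g (f z) * (deriv f z * k)))) (at z)"
      by (rule has_derivative_diff[OF d2 d1])
    moreover have "(\<lambda>k. Re (H z * k) - Re (g (f z) * (deriv f z * k))) = (\<lambda>h. 0)"
      by (simp add: fun_eq_iff H_def mult.assoc)
    ultimately show "((\<lambda>z. Re (G z) - v (f z)) has_derivative (\<lambda>h. 0)) (at z within ball 0 1)"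
      by (simp add: has_derivative_at_withinI)
  qed
  then obtain c where c: "\<forall>z\<in>ball 0 1. Re (G z) - v (f z) = c" by blast
  have "\<forall>z\<in>ball 0 1. u (f z) + (cmod (f z))\<^sup>2 = Re (G z) + (- c)"
  proof
    fix z :: complex assume "z \<in> ball 0 1"
    hence "Re (G z) - v (f z) = c" using c by blast
    thus "u (f z) + (cmod (f z))\<^sup>2 = Re (G z) + (- c)" unfolding v_def by linarith
  qed
  thus ?thesis using holG by (intro exI[of _ G] exI[of _ "-c"] conjI)
qed



lemma int_cis:
  fixes m :: int
  shows "((\<lambda>\<theta>. cis (of_int m * \<theta>)) has_integral (if m = 0 then complex_of_real (2*pi) else 0)) {0..2*pi}"
proof (cases "m = 0")
  case True
  thus ?thesis using has_integral_const_real[of "1::complex" 0 "2*pi"] by (simp add: scaleR_conv_of_real)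
next
  case False
  define E where "E = (\<lambda>z::complex. exp (\<i> * of_int m * z) / (\<i> * of_int m))"
  have dE: "(E has_field_derivative exp (\<i> * of_int m * z)) (at z)" for z
    unfolding E_def using False
    by (auto intro!: derivative_eq_intros simp: field_simps)
  have "((\<lambda>x. exp (\<i> * of_int m * complex_of_real x)) has_integral (E (of_real (2*pi)) - E (of_real 0))) {0..2*pi}"
  proof (rule fundamental_theorem_of_calculus)
    fix x :: real assume "x \<in> {0..2*pi}"
    show "((\<lambda>x. E (of_real x)) has_vector_derivative exp (\<i> * of_int m * complex_of_real x)) (at x within {0..2*pi})"
      by (rule has_vector_derivative_real_field[OF dE])
  qed simp
  moreover have "E (of_real (2*pi)) - E (of_real 0) = 0"
  proof -
    have "exp (\<i> * of_int m * complex_of_real (2*pi)) = 1"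
      using exp_integer_2pi[of "of_int m"] by (simp add: mult_ac)
    thus ?thesis by (simp add: E_def)
  qed
  moreover have "exp (\<i> * of_int m * complex_of_real x) = cis (of_int m * x)" for x
    by (simp add: cis_conv_exp mult_ac)
  ultimately show ?thesis using False by simp
qed

lemma approx_int:
  fixes \<phi> :: "real \<Rightarrow> 'a::banach"
  assumes ab: "a \<le> b"
    and approx: "\<And>e. e > 0 \<Longrightarrow> \<exists>\<psi> I'. (\<psi> has_integral I') {a..b} \<and> norm (I' - I) \<le> e \<and> (\<forall>x\<in>{a..b}. norm (\<phi> x - \<psi> x) \<le> e)"
  shows "(\<phi> has_integral I) {a..b}"
proof -
  have int: "\<phi> integrable_on cbox a b"
  proof (rule integrable_uniform_limit)
    fix e :: real assume "e > 0"
    then obtain \<psi> I' where "(\<psi> has_integral I') {a..b}" "\<forall>x\<in>{a..b}. norm (\<phi> x - \<psi> x) \<le> e"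
      using approx by blast
    thus "\<exists>g. (\<forall>x\<in>cbox a b. norm (\<phi> x - g x) \<le> e) \<and> g integrable_on cbox a b"
      by (auto simp: integrable_on_def)
  qed
  define J where "J = integral {a..b} \<phi>"
  have J: "(\<phi> has_integral J) {a..b}" using int by (simp add: J_def has_integral_integral)
  have bnd: "norm (J - I) \<le> e * (b - a + 1)" if e: "e > 0" for e
  proof -
    obtain \<psi> I' where \<psi>: "(\<psi> has_integral I') {a..b}" "norm (I' - I) \<le> e" "\<forall>x\<in>{a..b}. norm (\<phi> x - \<psi> x) \<le> e"
      using approx e by blast
    have D: "((\<lambda>x. \<phi> x - \<psi> x) has_integral (J - I')) (cbox a b)"
      using has_integral_diff[OF J \<psi>(1)] by simp
    have "norm (J - I') \<le> e * measure lborel (cbox a b)"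
      by (rule has_integral_bound[OF _ D]) (use e \<psi>(3) in auto)
    also have "\<dots> = e * (b - a)" using ab e by simp
    finally have "norm (J - I') \<le> e * (b - a)" .
    moreover have "norm (J - I) \<le> norm (J - I') + norm (I' - I)"
      by (metis diff_add_cancel norm_triangle_ineq add_diff_eq)
    ultimately show ?thesis using \<psi>(2) by (simp add: algebra_simps)
  qed
  hence "norm (J - I) \<le> 0"
  proof -
    have "norm (J - I) \<le> d" if "d > 0" for d
    proof -
      have "norm (J - I) \<le> (d / (b - a + 1)) * (b - a + 1)"
        using bnd[of "d / (b - a + 1)"] that ab by simp
      thus ?thesis using ab by simp
    qed
    thus ?thesis by (meson dense not_le)
  qed
  hence "J = I" by simp
  thus ?thesis using J by simp
qed

lemma ps_tail:
  fixes d :: "nat \<Rightarrow> complex"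
  assumes sm: "summable (\<lambda>n. norm (d n) * r ^ n)" and z: "norm z = r"
  shows "summable (\<lambda>n. d n * z ^ n)"
    and "norm ((\<Sum>n. d n * z ^ n) - (\<Sum>n<N. d n * z ^ n)) \<le> (\<Sum>n. norm (d (n + N)) * r ^ (n + N))"
proof -
  have nn: "norm (d n * z ^ n) = norm (d n) * r ^ n" for n using z by (simp add: norm_mult norm_power)
  have sn: "summable (\<lambda>n. norm (d n * z ^ n))" using sm by (simp add: nn)
  thus s: "summable (\<lambda>n. d n * z ^ n)" by (rule summable_norm_cancel)
  have "(\<Sum>n. d n * z ^ n) - (\<Sum>n<N. d n * z ^ n) = (\<Sum>n. d (n + N) * z ^ (n + N))"
    using suminf_split_initial_segment[OF s, of N] by simp
  also have "norm \<dots> \<le> (\<Sum>n. norm (d (n + N) * z ^ (n + N)))"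
    by (rule summable_norm) (use summable_ignore_initial_segment[OF sn, of N] in simp)
  also have "\<dots> = (\<Sum>n. norm (d (n + N)) * r ^ (n + N))" by (simp add: nn)
  finally show "norm ((\<Sum>n. d n * z ^ n) - (\<Sum>n<N. d n * z ^ n)) \<le> (\<Sum>n. norm (d (n + N)) * r ^ (n + N))" .
qed

lemma tail_small:
  fixes a :: "nat \<Rightarrow> real"
  assumes "summable a" "e > 0"
  shows "\<exists>N\<ge>1. norm (\<Sum>n. a (n + N)) \<le> e"
proof -
  obtain N where H: "\<forall>n\<ge>N. norm (\<Sum>i. a (i + n)) < e" using suminf_exist_split[OF assms(2,1)] by blast
  have "norm (\<Sum>i. a (i + (N + 1))) < e" using H[rule_format, of "N+1"] by simp
  thus ?thesis by (intro exI[of _ "N + 1"]) auto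
qed

lemma ps_mean:
  fixes d :: "nat \<Rightarrow> complex"
  assumes r: "0 \<le> r" and sm: "summable (\<lambda>n. norm (d n) * r ^ n)"
  shows "((\<lambda>\<theta>. \<Sum>n. d n * (of_real r * cis \<theta>) ^ n) has_integral (of_real (2*pi) * d 0)) {0..2*pi}"
proof (rule approx_int)
  fix e :: real assume e: "e > 0"
  obtain N where N: "N \<ge> 1" "norm (\<Sum>n. norm (d (n + N)) * r ^ (n + N)) \<le> e"
    using tail_small[OF summable_ignore_initial_segment[OF sm, of 0] e] sm tail_small[OF sm e] by auto
  define \<psi> where "\<psi> = (\<lambda>\<theta>. \<Sum>n<N. d n * (of_real r * cis \<theta>) ^ n)"
  have nz: "norm (of_real r * cis \<theta>) = r" for \<theta> using r by (simp add: norm_mult)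
  have i1: "((\<lambda>\<theta>. \<Sum>n<N. d n * of_real (r ^ n) * cis (of_int (int n) * \<theta>)) has_integral
      (\<Sum>n<N. d n * of_real (r ^ n) * (if int n = 0 then complex_of_real (2*pi) else 0))) {0..2*pi}"
    by (intro has_integral_sum finite_lessThan has_integral_mult_right int_cis)
  have i2: "(\<Sum>n<N. d n * of_real (r ^ n) * (if int n = 0 then complex_of_real (2*pi) else 0)) = of_real (2*pi) * d 0"
  proof -
    have "(\<Sum>n<N. d n * of_real (r ^ n) * (if int n = 0 then complex_of_real (2*pi) else 0))
        = (\<Sum>n\<in>{0}. d n * of_real (r ^ n) * complex_of_real (2*pi))"
      by (rule sum.mono_neutral_cong_right) (use N in auto)
    thus ?thesis by simp
  qed
  have pw: "(of_real r * cis \<theta>) ^ n = of_real (r ^ n) * cis (of_int (int n) * \<theta>)" for \<theta> n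
    by (simp add: power_mult_distrib) (use Complex.DeMoivre in blast)
  have i3: "(\<lambda>\<theta>. \<Sum>n<N. d n * of_real (r ^ n) * cis (of_int (int n) * \<theta>)) = \<psi>"
    unfolding \<psi>_def pw by (simp add: mult.assoc)
  have "(\<psi> has_integral of_real (2*pi) * d 0) {0..2*pi}" using i1 unfolding i2 i3 .
  moreover have "norm ((\<Sum>n. d n * (of_real r * cis \<theta>) ^ n) - \<psi> \<theta>) \<le> e" for \<theta>
    using ps_tail(2)[OF sm nz[of \<theta>], where N=N] N(2) unfolding \<psi>_def by simp
  ultimately show "\<exists>\<psi> I'. (\<psi> has_integral I') {0..2*pi} \<and> norm (I' - of_real (2*pi) * d 0) \<le> e \<and>
      (\<forall>x\<in>{0..2*pi}. norm ((\<Sum>n. d n * (of_real r * cis x) ^ n) - \<psi> x) \<le> e)"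
    using e by (intro exI[of _ \<psi>] exI[of _ "of_real (2*pi) * d 0"]) auto
qed simp

lemma pw_cis: "(complex_of_real r * cis \<theta>) ^ n = of_real (r ^ n) * cis (of_int (int n) * \<theta>)"
  by (simp add: power_mult_distrib) (use Complex.DeMoivre in blast)

lemma parseval_finite:
  fixes d :: "nat \<Rightarrow> complex"
  shows "((\<lambda>\<theta>. (cmod (\<Sum>n<N. d n * (of_real r * cis \<theta>) ^ n))\<^sup>2) has_integral
     (2 * pi * (\<Sum>n<N. (cmod (d n))\<^sup>2 * r ^ (2 * n)))) {0..2*pi}"
proof -
  define T where "T = (\<lambda>m n \<theta>. d m * cnj (d n) * of_real (r ^ m * r ^ n) * cis (of_int (int m - int n) * \<theta>))"
  have eq: "complex_of_real ((cmod (\<Sum>n<N. d n * (of_real r * cis \<theta>) ^ n))\<^sup>2) = (\<Sum>m<N. \<Sum>n<N. T m n \<theta>)" for \<theta>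
  proof -
    have "complex_of_real ((cmod (\<Sum>n<N. d n * (of_real r * cis \<theta>) ^ n))\<^sup>2)
       = (\<Sum>m<N. d m * (of_real r * cis \<theta>) ^ m) * cnj (\<Sum>n<N. d n * (of_real r * cis \<theta>) ^ n)"
      by (rule complex_norm_square)
    also have "\<dots> = (\<Sum>m<N. \<Sum>n<N. (d m * (of_real r * cis \<theta>) ^ m) * cnj (d n * (of_real r * cis \<theta>) ^ n))"
      by (simp add: sum_distrib_left sum_distrib_right cnj_sum) (rule sum.swap)
    also have "\<dots> = (\<Sum>m<N. \<Sum>n<N. T m n \<theta>)"
    proof (intro sum.cong refl)
      fix m n
      have "cis (of_int (int m) * \<theta>) * cnj (cis (of_int (int n) * \<theta>)) = cis (of_int (int m - int n) * \<theta>)"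
        by (simp add: cis_cnj cis_mult algebra_simps)
      thus "(d m * (of_real r * cis \<theta>) ^ m) * cnj (d n * (of_real r * cis \<theta>) ^ n) = T m n \<theta>"
        unfolding T_def pw_cis by (simp add: mult_ac)
    qed
    finally show ?thesis .
  qed
  have "((\<lambda>\<theta>. \<Sum>m<N. \<Sum>n<N. T m n \<theta>) has_integral
      (\<Sum>m<N. \<Sum>n<N. d m * cnj (d n) * of_real (r ^ m * r ^ n) * (if int m - int n = 0 then complex_of_real (2*pi) else 0))) {0..2*pi}"
    unfolding T_def by (intro has_integral_sum finite_lessThan has_integral_mult_right int_cis)
  moreover have "(\<Sum>m<N. \<Sum>n<N. d m * cnj (d n) * of_real (r ^ m * r ^ n) * (if int m - int n = 0 then complex_of_real (2*pi) else 0))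
      = complex_of_real (2 * pi * (\<Sum>n<N. (cmod (d n))\<^sup>2 * r ^ (2 * n)))"
  proof -
    have "(\<Sum>m<N. \<Sum>n<N. d m * cnj (d n) * of_real (r ^ m * r ^ n) * (if int m - int n = 0 then complex_of_real (2*pi) else 0))
        = (\<Sum>m<N. d m * cnj (d m) * of_real (r ^ m * r ^ m) * complex_of_real (2*pi))"
    proof (rule sum.cong[OF refl])
      fix m assume m: "m \<in> {..<N}"
      have "(\<Sum>n<N. d m * cnj (d n) * of_real (r ^ m * r ^ n) * (if int m - int n = 0 then complex_of_real (2*pi) else 0))
          = (\<Sum>n\<in>{m}. d m * cnj (d n) * of_real (r ^ m * r ^ n) * complex_of_real (2*pi))"
        by (rule sum.mono_neutral_cong_right) (use m in auto)
      thus "(\<Sum>n<N. d m * cnj (d n) * of_real (r ^ m * r ^ n) * (if int m - int n = 0 then complex_of_real (2*pi) else 0))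
          = d m * cnj (d m) * of_real (r ^ m * r ^ m) * complex_of_real (2*pi)" by simp
    qed
    also have "\<dots> = complex_of_real (2 * pi * (\<Sum>n<N. (cmod (d n))\<^sup>2 * r ^ (2 * n)))"
    proof -
      have e1: "d m * cnj (d m) * of_real (r ^ m * r ^ m) * complex_of_real (2*pi)
          = complex_of_real (2 * pi * ((cmod (d m))\<^sup>2 * r ^ (2 * m)))" for m
      proof -
        have "d m * cnj (d m) * of_real (r ^ m * r ^ m) * complex_of_real (2*pi)
          = complex_of_real ((cmod (d m))\<^sup>2) * of_real (r ^ (2 * m)) * complex_of_real (2*pi)"
          by (simp only: complex_norm_square power_mult_distrib mult_2 power_add of_real_mult)
        also have "\<dots> = complex_of_real (2 * pi * ((cmod (d m))\<^sup>2 * r ^ (2 * m)))"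
          by (simp only: of_real_mult mult_ac)
        finally show ?thesis .
      qed
      show ?thesis unfolding e1 by (simp add: sum_distrib_left)
    qed
    finally show ?thesis .
  qed
  ultimately have "((\<lambda>\<theta>. complex_of_real ((cmod (\<Sum>n<N. d n * (of_real r * cis \<theta>) ^ n))\<^sup>2)) has_integral
      complex_of_real (2 * pi * (\<Sum>n<N. (cmod (d n))\<^sup>2 * r ^ (2 * n)))) {0..2*pi}"
    unfolding eq by simp
  from has_integral_Re[OF this] show ?thesis by simp
qed

lemma sq_diff_bound:
  fixes x y A :: real
  assumes "0 \<le> x" "0 \<le> y" "x \<le> A" "y \<le> A" "\<bar>x - y\<bar> \<le> t"
  shows "\<bar>x\<^sup>2 - y\<^sup>2\<bar> \<le> 2 * A * t"
proof -
  have "x\<^sup>2 - y\<^sup>2 = (x - y) * (x + y)" by (simp add: power2_eq_square algebra_simps)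
  hence "\<bar>x\<^sup>2 - y\<^sup>2\<bar> = \<bar>x - y\<bar> * (x + y)" using assms by (simp add: abs_mult)
  also have "\<dots> \<le> t * (2 * A)" using assms by (intro mult_mono) auto
  finally show ?thesis by (simp add: mult_ac)
qed

lemma ps_parseval:
  fixes d :: "nat \<Rightarrow> complex"
  assumes r: "0 \<le> r" and sm: "summable (\<lambda>n. norm (d n) * r ^ n)"
  shows "summable (\<lambda>n. (cmod (d n))\<^sup>2 * r ^ (2 * n))"
    and "((\<lambda>\<theta>. (cmod (\<Sum>n. d n * (of_real r * cis \<theta>) ^ n))\<^sup>2) has_integral
          (2 * pi * (\<Sum>n. (cmod (d n))\<^sup>2 * r ^ (2 * n)))) {0..2*pi}"
proof -
  define a where "a = (\<lambda>n. norm (d n) * r ^ n)"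
  define A where "A = suminf a"
  have a0: "0 \<le> a n" for n using r by (simp add: a_def)
  have sa: "summable a" using sm by (simp add: a_def)
  have aA: "a n \<le> A" for n
    using sum_le_suminf[OF sa, of "{n}"] a0 by (simp add: A_def)
  have A0: "0 \<le> A" using aA[of 0] a0[of 0] by simp
  have b: "(cmod (d n))\<^sup>2 * r ^ (2 * n) = a n * a n" for n
  proof -
    have "r ^ (2 * n) = r ^ n * r ^ n" by (simp add: mult_2 power_add)
    thus ?thesis by (simp add: a_def power2_eq_square mult_ac)
  qed
  have bf: "(\<lambda>n. (cmod (d n))\<^sup>2 * r ^ (2 * n)) = (\<lambda>n. a n * a n)" by (rule ext) (rule b)
  have bA: "a n * a n \<le> A * a n" for n using aA a0 by (simp add: mult_right_mono)
  have sb: "summable (\<lambda>n. a n * a n)"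
    by (rule summable_comparison_test[where g="\<lambda>n. A * a n"]) (use a0 bA sa in \<open>auto intro: summable_mult\<close>)
  thus sb': "summable (\<lambda>n. (cmod (d n))\<^sup>2 * r ^ (2 * n))" by (simp add: b)
  show "((\<lambda>\<theta>. (cmod (\<Sum>n. d n * (of_real r * cis \<theta>) ^ n))\<^sup>2) has_integral
          (2 * pi * (\<Sum>n. (cmod (d n))\<^sup>2 * r ^ (2 * n)))) {0..2*pi}"
  proof (rule approx_int)
    fix e :: real assume e: "e > 0"
    define \<delta> where "\<delta> = e / (2 * A + 2 * pi * A + 1)"
    have den: "2 * A + 2 * pi * A + 1 > 0" using A0 by (simp add: add_nonneg_pos)
    have \<delta>: "\<delta> > 0" using e den by (simp add: \<delta>_def)
    obtain N where N: "N \<ge> 1" "norm (\<Sum>n. a (n + N)) \<le> \<delta>" using tail_small[OF sa \<delta>] by blast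
    have tN: "(\<Sum>n. a (n + N)) \<le> \<delta>" using N(2) by simp
    have tb: "(\<Sum>n. a (n + N) * a (n + N)) \<le> A * \<delta>"
    proof -
      have "(\<Sum>n. a (n + N) * a (n + N)) \<le> (\<Sum>n. A * a (n + N))"
        by (rule suminf_le) (use bA summable_ignore_initial_segment[OF sb] summable_mult[OF summable_ignore_initial_segment[OF sa]] in auto)
      also have "\<dots> = A * (\<Sum>n. a (n + N))"
        by (rule suminf_mult[OF summable_ignore_initial_segment[OF sa]])
      also have "\<dots> \<le> A * \<delta>" using tN A0 by (simp add: mult_left_mono)
      finally show ?thesis .
    qed
    have 1: "2 * A * \<delta> \<le> e" and 2: "2 * pi * (A * \<delta>) \<le> e"
    proof -
      have "(2 * A) * \<delta> \<le> (2 * A + 2 * pi * A + 1) * \<delta>" using \<delta> A0 by (intro mult_right_mono) auto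
      also have "\<dots> = e" using den by (simp add: \<delta>_def)
      finally show "2 * A * \<delta> \<le> e" .
      have "(2 * pi * A) * \<delta> \<le> (2 * A + 2 * pi * A + 1) * \<delta>" using \<delta> A0 by (intro mult_right_mono) auto
      also have "\<dots> = e" using den by (simp add: \<delta>_def)
      finally show "2 * pi * (A * \<delta>) \<le> e" by (simp add: mult_ac)
    qed
    define \<psi> where "\<psi> = (\<lambda>\<theta>. (cmod (\<Sum>n<N. d n * (of_real r * cis \<theta>) ^ n))\<^sup>2)"
    have I: "(\<psi> has_integral (2 * pi * (\<Sum>n<N. (cmod (d n))\<^sup>2 * r ^ (2 * n)))) {0..2*pi}"
      unfolding \<psi>_def by (rule parseval_finite)
    have "(\<Sum>n. (cmod (d n))\<^sup>2 * r ^ (2 * n)) - (\<Sum>n<N. (cmod (d n))\<^sup>2 * r ^ (2 * n)) = (\<Sum>n. a (n + N) * a (n + N))"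
      unfolding bf using suminf_split_initial_segment[OF sb, of N] by simp
    hence Idiff: "norm (2 * pi * (\<Sum>n<N. (cmod (d n))\<^sup>2 * r ^ (2 * n)) - 2 * pi * (\<Sum>n. (cmod (d n))\<^sup>2 * r ^ (2 * n))) \<le> e"
    proof -
      assume h: "(\<Sum>n. (cmod (d n))\<^sup>2 * r ^ (2 * n)) - (\<Sum>n<N. (cmod (d n))\<^sup>2 * r ^ (2 * n)) = (\<Sum>n. a (n + N) * a (n + N))"
      have t0: "0 \<le> (\<Sum>n. a (n + N) * a (n + N))"
        by (rule suminf_nonneg) (use summable_ignore_initial_segment[OF sb] a0 in auto)
      have n1: "norm (2 * pi * (\<Sum>n<N. (cmod (d n))\<^sup>2 * r ^ (2 * n)) - 2 * pi * (\<Sum>n. (cmod (d n))\<^sup>2 * r ^ (2 * n)))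
          = 2 * pi * (\<Sum>n. a (n + N) * a (n + N))"
        by (simp add: abs_minus_commute right_diff_distrib[symmetric] abs_mult h t0)
      have "2 * pi * (\<Sum>n. a (n + N) * a (n + N)) \<le> 2 * pi * (A * \<delta>)"
        using tb by (intro mult_left_mono) auto
      thus ?thesis using n1 2 by linarith
    qed
    have pt: "norm ((cmod (\<Sum>n. d n * (of_real r * cis \<theta>) ^ n))\<^sup>2 - \<psi> \<theta>) \<le> e" for \<theta>
    proof -
      have nz: "norm (of_real r * cis \<theta>) = r" using r by (simp add: norm_mult)
      define F where "F = (\<Sum>n. d n * (of_real r * cis \<theta>) ^ n)"
      define S where "S = (\<Sum>n<N. d n * (of_real r * cis \<theta>) ^ n)"
      have nn: "norm (d n * (of_real r * cis \<theta>) ^ n) = a n" for n using nz by (simp add: a_def norm_mult norm_power)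
      have FA: "cmod F \<le> A"
      proof -
        have "cmod F \<le> (\<Sum>n. norm (d n * (of_real r * cis \<theta>) ^ n))"
          unfolding F_def by (rule summable_norm) (use sa in \<open>simp add: nn\<close>)
        thus ?thesis by (simp add: nn A_def)
      qed
      have SA: "cmod S \<le> A"
      proof -
        have "cmod S \<le> (\<Sum>n<N. norm (d n * (of_real r * cis \<theta>) ^ n))" unfolding S_def by (rule norm_sum)
        also have "\<dots> = (\<Sum>n<N. a n)" by (simp add: nn)
        also have "\<dots> \<le> A" unfolding A_def by (rule sum_le_suminf) (use sa a0 in auto)
        finally show ?thesis .
      qed
      have "norm (F - S) \<le> (\<Sum>n. norm (d (n + N)) * r ^ (n + N))"
        unfolding F_def S_def by (rule ps_tail(2)[OF sm nz])
      hence FS: "\<bar>cmod F - cmod S\<bar> \<le> \<delta>" using tN unfolding a_def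
        by (meson norm_triangle_ineq3 order_trans)
      have "\<bar>(cmod F)\<^sup>2 - (cmod S)\<^sup>2\<bar> \<le> 2 * A * \<delta>"
        by (rule sq_diff_bound) (use FA SA FS in auto)
      thus ?thesis using 1 by (simp add: \<psi>_def F_def S_def)
    qed
    show "\<exists>\<psi> I'. (\<psi> has_integral I') {0..2*pi} \<and> norm (I' - 2 * pi * (\<Sum>n. (cmod (d n))\<^sup>2 * r ^ (2 * n))) \<le> e \<and>
        (\<forall>x\<in>{0..2*pi}. norm ((cmod (\<Sum>n. d n * (of_real r * cis x) ^ n))\<^sup>2 - \<psi> x) \<le> e)"
      using I Idiff pt by blast
  qed simp
qed



lemma hk_leb:
  fixes g :: "real \<Rightarrow> real"
  assumes "continuous_on {a..b} g"
  shows "integral {a..b} g = integral\<^sup>L lborel (\<lambda>x. indicator {a..b} x *\<^sub>R g x)"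
proof -
  have si: "set_integrable lborel {a..b} g"
    unfolding set_integrable_def by (rule borel_integrable_compact[OF compact_Icc assms])
  show ?thesis using set_borel_integral_eq_integral(2)[OF si] by (simp add: set_lebesgue_integral_def)
qed

lemma cont_circ:
  fixes u :: "complex \<Rightarrow> real"
  assumes ucont: "continuous_on V u" and contf: "continuous_on (ball 0 1) f"
    and into: "f ` ball 0 1 \<subseteq> V" and \<rho>: "0 \<le> \<rho>" "\<rho> < 1"
  shows "continuous_on A (\<lambda>\<theta>. u (f (of_real \<rho> * cis \<theta>)))"
proof -
  have c1: "continuous_on A (\<lambda>\<theta>. of_real \<rho> * cis \<theta>)"
    by (intro continuous_intros)
  have m: "(\<lambda>\<theta>. of_real \<rho> * cis \<theta>) ` A \<subseteq> ball 0 1" using \<rho> by (auto simp: norm_mult)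
  have "continuous_on A (\<lambda>\<theta>. f (of_real \<rho> * cis \<theta>))"
    by (rule continuous_on_compose2[OF contf c1 m])
  moreover have "(\<lambda>\<theta>. f (of_real \<rho> * cis \<theta>)) ` A \<subseteq> V" using m into by auto
  ultimately show ?thesis by (rule continuous_on_compose2[OF ucont])
qed

lemma dct_part:
  fixes u U :: "complex \<Rightarrow> real" and f :: "complex \<Rightarrow> complex"
  assumes Ucont: "continuous_on (closure V) U" and UV: "\<forall>w\<in>V. U w = u w"
    and U0: "\<forall>w\<in>frontier V. U w = 0"
    and unn: "\<forall>w\<in>V. 0 \<le> u w" and ucont: "continuous_on V u"
    and contf: "continuous_on (ball 0 1) f" and into: "f ` ball 0 1 \<subseteq> V" and K: "K > 0"
    and B_proper: "AE \<theta> in lborel. \<theta> \<in> {0..<2*pi} \<longrightarrow>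
        (\<exists>L. ((\<lambda>r::real. f (complex_of_real r * cis \<theta>)) \<longlongrightarrow> L) (at_left 1) \<and> L \<in> frontier V)"
  shows "(\<lambda>k. integral {0..2*pi} (\<lambda>\<theta>. min (u (f (of_real (1 - 1 / (real k + 2)) * cis \<theta>))) K)) \<longlonglongrightarrow> 0"
proof -
  define r where "r = (\<lambda>k::nat. 1 - 1 / (real k + 2))"
  have r: "0 \<le> r k" "r k < 1" for k by (auto simp: r_def field_simps)
  have rlim: "filterlim r (at_left 1) sequentially"
  proof (rule tendsto_imp_filterlim_at_left)
    have "(\<lambda>k. 1 / (real k + 2)) \<longlonglongrightarrow> 0" by real_asymp
    hence "(\<lambda>k. 1 - 1 / (real k + 2)) \<longlonglongrightarrow> 1 - 0" by (intro tendsto_diff tendsto_const)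
    thus "r \<longlonglongrightarrow> 1" by (simp add: r_def)
    show "\<forall>\<^sub>F k in sequentially. r k < 1" using r by simp
  qed
  define s where "s = (\<lambda>k \<theta>. indicator {0..2*pi} \<theta> *\<^sub>R min (u (f (of_real (r k) * cis \<theta>))) K)"
  have cs: "continuous_on {0..2*pi} (\<lambda>\<theta>. min (u (f (of_real (r k) * cis \<theta>))) K)" for k
    by (intro continuous_on_min continuous_on_const cont_circ[OF ucont contf into r])
  have eq: "integral {0..2*pi} (\<lambda>\<theta>. min (u (f (of_real (r k) * cis \<theta>))) K) = integral\<^sup>L lborel (s k)" for k
    unfolding s_def by (rule hk_leb[OF cs])
  have m1: "(\<lambda>\<theta>::real. 0::real) \<in> borel_measurable lborel" by simp

  have m2: "s k \<in> borel_measurable lborel" for k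
      unfolding s_def using borel_measurable_continuous_on_indicator[OF _ cs] by simp
  have m3: "integrable lborel (\<lambda>\<theta>. indicator {0..2*pi} \<theta> *\<^sub>R K)"
      by (rule borel_integrable_compact[OF compact_Icc continuous_on_const])
  have m5: "AE \<theta> in lborel. norm (s k \<theta>) \<le> indicator {0..2*pi} \<theta> *\<^sub>R K" for k
    proof (rule AE_I2)
      fix \<theta> :: real
      have "f (of_real (r k) * cis \<theta>) \<in> V" using into r[of k] by (auto simp: norm_mult)
      hence "0 \<le> u (f (of_real (r k) * cis \<theta>))" using unn by auto
      thus "norm (s k \<theta>) \<le> indicator {0..2*pi} \<theta> *\<^sub>R K" using K
        by (auto simp: s_def indicator_def)
    qed
  have m4: "AE \<theta> in lborel. (\<lambda>k. s k \<theta>) \<longlonglongrightarrow> 0"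
      using B_proper AE_lborel_singleton[of "2*pi"]
    proof eventually_elim
      case (elim \<theta>)
      show ?case
      proof (cases "\<theta> \<in> {0..2*pi}")
        case False
        thus ?thesis by (simp add: s_def)
      next
        case True
        hence "\<theta> \<in> {0..<2*pi}" using elim by auto
        then obtain L where L: "((\<lambda>\<rho>::real. f (complex_of_real \<rho> * cis \<theta>)) \<longlongrightarrow> L) (at_left 1)" "L \<in> frontier V"
          using elim by blast
        have fl: "((\<lambda>k. f (complex_of_real (r k) * cis \<theta>)) \<longlongrightarrow> L) sequentially"
          using filterlim_compose[OF L(1) rlim] by (simp add: o_def)
        have inV: "f (complex_of_real (r k) * cis \<theta>) \<in> V" for k using into r[of k] by (auto simp: norm_mult)
        have Lc: "L \<in> closure V" using L(2) by (simp add: frontier_def)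
        have "((\<lambda>k. U (f (complex_of_real (r k) * cis \<theta>))) \<longlongrightarrow> U L) sequentially"
        proof (rule continuous_on_tendsto_compose[OF Ucont fl Lc])
          have "f (complex_of_real (r k) * cis \<theta>) \<in> closure V" for k using inV[of k] closure_subset by blast
          thus "\<forall>\<^sub>F k in sequentially. f (complex_of_real (r k) * cis \<theta>) \<in> closure V" by simp
        qed
        moreover have "(\<lambda>k. U (f (complex_of_real (r k) * cis \<theta>))) = (\<lambda>k. u (f (complex_of_real (r k) * cis \<theta>)))"
          using UV inV by blast
        moreover have "U L = 0" using U0 L(2) by blast
        ultimately have "((\<lambda>k. u (f (complex_of_real (r k) * cis \<theta>))) \<longlongrightarrow> 0) sequentially"
          by simp
        hence "((\<lambda>k. min (u (f (complex_of_real (r k) * cis \<theta>))) K) \<longlongrightarrow> min 0 K) sequentially"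
          by (intro tendsto_min tendsto_const)
        thus ?thesis using True K by (simp add: s_def)
      qed
    qed
  have "(\<lambda>k. integral\<^sup>L lborel (s k)) \<longlonglongrightarrow> integral\<^sup>L lborel (\<lambda>\<theta>::real. 0::real)"
    by (rule Bochner_Integration.integral_dominated_convergence[OF m1 m2 m3 m4 m5])
  thus ?thesis using eq by (simp add: r_def)
qed



lemma smc_gen:
  fixes a :: "nat \<Rightarrow> complex"
  assumes S: "\<And>z. z \<in> ball 0 1 \<Longrightarrow> (\<lambda>n. a n * z ^ n) sums F z" and \<rho>: "0 \<le> \<rho>" "\<rho> < 1"
  shows "summable (\<lambda>n. norm (a n) * \<rho> ^ n)"
proof -
  define s where "s = (1 + \<rho>) / 2"
  have s: "\<rho> < s" "s < 1" using \<rho> by (auto simp: s_def)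
  have "summable (\<lambda>n. a n * (of_real s) ^ n)" using S[of "of_real s"] s \<rho> by (auto simp: sums_iff)
  hence "summable (\<lambda>n. norm (a n * (of_real \<rho>) ^ n))"
    by (rule powser_insidea) (use s \<rho> in auto)
  thus ?thesis using \<rho> by (simp add: norm_mult norm_power)
qed

lemma ser_eq:
  fixes a :: "nat \<Rightarrow> complex"
  assumes S: "\<And>z. z \<in> ball 0 1 \<Longrightarrow> (\<lambda>n. a n * z ^ n) sums F z" and \<rho>: "0 \<le> \<rho>" "\<rho> < 1"
  shows "F (of_real \<rho> * cis \<theta>) = (\<Sum>n. a n * (of_real \<rho> * cis \<theta>) ^ n)"
proof -
  have "of_real \<rho> * cis \<theta> \<in> ball 0 1" using \<rho> by (simp add: norm_mult)
  thus ?thesis using S sums_unique by metis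
qed

lemma mean_value:
  fixes u :: "complex \<Rightarrow> real" and f G :: "complex \<Rightarrow> complex"
  assumes holG: "G holomorphic_on ball 0 1"
    and eq: "\<forall>z\<in>ball 0 1. u (f z) + (cmod (f z))\<^sup>2 = Re (G z) + k0"
    and \<rho>: "0 \<le> \<rho>" "\<rho> < 1"
  shows "((\<lambda>\<theta>. u (f (of_real \<rho> * cis \<theta>)) + (cmod (f (of_real \<rho> * cis \<theta>)))\<^sup>2) has_integral
           2 * pi * (u (f 0) + (cmod (f 0))\<^sup>2)) {0..2*pi}"
proof -
  define b where "b = (\<lambda>n. (deriv ^^ n) G 0 / fact n)"
  have S: "(\<lambda>n. b n * z ^ n) sums G z" if "z \<in> ball 0 1" for z
    using holomorphic_power_series[OF holG that] by (simp add: b_def)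
  have b0: "b 0 = G 0" by (simp add: b_def)
  have "((\<lambda>\<theta>. \<Sum>n. b n * (of_real \<rho> * cis \<theta>) ^ n) has_integral (of_real (2*pi) * b 0)) {0..2*pi}"
    by (rule ps_mean[OF \<rho>(1) smc_gen[OF S \<rho>]])
  hence "((\<lambda>\<theta>. G (of_real \<rho> * cis \<theta>)) has_integral (of_real (2*pi) * G 0)) {0..2*pi}"
    using ser_eq[OF S \<rho>] b0 by simp
  from has_integral_Re[OF this]
  have "((\<lambda>\<theta>. Re (G (of_real \<rho> * cis \<theta>))) has_integral (2*pi * Re (G 0))) {0..2*pi}" by simp
  hence "((\<lambda>\<theta>. Re (G (of_real \<rho> * cis \<theta>)) + k0) has_integral (2*pi * Re (G 0) + (2*pi) * k0)) {0..2*pi}"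
    using has_integral_add[OF _ has_integral_const_real[of k0 0 "2*pi"]] by simp
  moreover have "Re (G (of_real \<rho> * cis \<theta>)) + k0 = u (f (of_real \<rho> * cis \<theta>)) + (cmod (f (of_real \<rho> * cis \<theta>)))\<^sup>2" for \<theta>
    using eq \<rho> by (simp add: norm_mult)
  moreover have "2*pi * Re (G 0) + (2*pi) * k0 = 2 * pi * (u (f 0) + (cmod (f 0))\<^sup>2)"
    using eq by (simp add: algebra_simps)
  ultimately show ?thesis by simp
qed



theorem proposition3:
  fixes V :: "complex set" and c :: "nat \<Rightarrow> complex" and f :: "complex \<Rightarrow> complex"
    and u :: "complex \<Rightarrow> real"
  assumes domain: "open V" "connected V" "V \<noteq> {}" "V \<noteq> UNIV"
    and series: "\<And>z. z \<in> ball 0 1 \<Longrightarrow> (\<lambda>n. c n * z ^ n) sums f z"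
    and into: "f ` ball 0 1 \<subseteq> V"
    and B_proper: "AE \<theta> in lborel. \<theta> \<in> {0..<2*pi} \<longrightarrow>
        (\<exists>L. ((\<lambda>r::real. f (complex_of_real r * cis \<theta>)) \<longlongrightarrow> L) (at_left 1) \<and> L \<in> frontier V)"
    and u_cont: "continuous_on V u"
    and u_C2: "C2_on V u"
    and u_lap: "\<And>w. w \<in> V \<Longrightarrow> laplacian u w = -4"
    and u_bdry: "\<exists>U. continuous_on (closure V) U \<and> (\<forall>w\<in>V. U w = u w) \<and> (\<forall>w\<in>frontier V. U w = 0)"
    and u_bound: "\<exists>C>0. \<forall>w\<in>V. 0 \<le> u w \<and> u w \<le> C * (cmod w)\<^sup>2 + C"
  shows "(\<lambda>n. (cmod (c (Suc n)))\<^sup>2) sums u (c 0)"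
proof -
  have holf: "f holomorphic_on ball 0 1"
    by (rule power_series_holomorphic[where a=c]) (use series in simp)
  have contf: "continuous_on (ball 0 1) f" by (rule holomorphic_on_imp_continuous_on[OF holf])
  have c0: "f 0 = c 0"
    using series[of 0] powser_sums_zero[of c] sums_unique2 by auto
  obtain C where C: "C > 0" "\<forall>w\<in>V. 0 \<le> u w \<and> u w \<le> C * (cmod w)\<^sup>2 + C" using u_bound by blast
  obtain U where U: "continuous_on (closure V) U" "\<forall>w\<in>V. U w = u w" "\<forall>w\<in>frontier V. U w = 0"
    using u_bdry by blast
  have unn: "\<forall>w\<in>V. 0 \<le> u w" using C by blast
  have inV: "f (of_real \<rho> * cis \<theta>) \<in> V" if "0 \<le> \<rho>" "\<rho> < 1" for \<rho> \<theta>
    using into that by (auto simp: norm_mult)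
  obtain G k0 where G: "G holomorphic_on ball 0 1" "\<forall>z\<in>ball 0 1. u (f z) + (cmod (f z))\<^sup>2 = Re (G z) + k0"
    using conj_exists[OF domain(1) u_C2 u_lap holf into] by blast
  have MV: "((\<lambda>\<theta>. u (f (of_real \<rho> * cis \<theta>)) + (cmod (f (of_real \<rho> * cis \<theta>)))\<^sup>2) has_integral
           2 * pi * (u (c 0) + (cmod (c 0))\<^sup>2)) {0..2*pi}" if "0 \<le> \<rho>" "\<rho> < 1" for \<rho>
    using mean_value[OF G that] c0 by simp
  have smc: "summable (\<lambda>n. norm (c n) * \<rho> ^ n)" if "0 \<le> \<rho>" "\<rho> < 1" for \<rho>
    by (rule smc_gen[OF series that])
  have PS: "((\<lambda>\<theta>. (cmod (f (of_real \<rho> * cis \<theta>)))\<^sup>2) has_integral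
           2 * pi * (\<Sum>n. (cmod (c n))\<^sup>2 * \<rho> ^ (2 * n))) {0..2*pi}"
       "summable (\<lambda>n. (cmod (c n))\<^sup>2 * \<rho> ^ (2 * n))" if "0 \<le> \<rho>" "\<rho> < 1" for \<rho>
    using ps_parseval[OF that(1) smc[OF that]] ser_eq[OF series that] by simp_all
  define Q where "Q = (\<lambda>\<rho>. \<Sum>n. (cmod (c (Suc n)))\<^sup>2 * \<rho> ^ (2 * Suc n))"
  have K1: "((\<lambda>\<theta>. u (f (of_real \<rho> * cis \<theta>))) has_integral 2 * pi * (u (c 0) - Q \<rho>)) {0..2*pi}"
    if "0 \<le> \<rho>" "\<rho> < 1" for \<rho>
  proof -
    have "(\<Sum>n. (cmod (c n))\<^sup>2 * \<rho> ^ (2 * n)) = (cmod (c 0))\<^sup>2 + Q \<rho>"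
      using suminf_split_head[OF PS(2)[OF that]] by (simp add: Q_def)
    thus ?thesis using has_integral_diff[OF MV[OF that] PS(1)[OF that]] by (simp add: algebra_simps)
  qed
  have Qle: "Q \<rho> \<le> u (c 0)" if "0 \<le> \<rho>" "\<rho> < 1" for \<rho>
  proof -
    have "0 \<le> 2 * pi * (u (c 0) - Q \<rho>)"
      by (rule has_integral_nonneg[OF K1[OF that]]) (use unn inV[OF that] in auto)
    thus ?thesis using pi_gt_zero by (simp add: zero_le_mult_iff)
  qed
  define p where "p = (\<lambda>n. (cmod (c (Suc n)))\<^sup>2)"
  define rk where "rk = (\<lambda>k::nat. 1 - 1 / (real k + 2))"
  have rk: "0 \<le> rk k" "rk k < 1" for k by (auto simp: rk_def field_simps)
  have rklim: "rk \<longlonglongrightarrow> 1"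
  proof -
    have "(\<lambda>k. 1 / (real k + 2)) \<longlonglongrightarrow> 0" by real_asymp
    hence "(\<lambda>k. 1 - 1 / (real k + 2)) \<longlonglongrightarrow> 1 - 0" by (intro tendsto_diff tendsto_const)
    thus ?thesis by (simp add: rk_def)
  qed
  have partial: "(\<Sum>n<N. p n) \<le> u (c 0)" for N
  proof -
    have le: "(\<Sum>n<N. p n * rk k ^ (2 * Suc n)) \<le> u (c 0)" for k
    proof -
      have sQ: "summable (\<lambda>n. (cmod (c (Suc n)))\<^sup>2 * rk k ^ (2 * Suc n))"
        using PS(2)[OF rk[of k]] summable_Suc_iff[where f="\<lambda>n. (cmod (c n))\<^sup>2 * rk k ^ (2 * n)"] by simp
      have "(\<Sum>n<N. p n * rk k ^ (2 * Suc n)) \<le> Q (rk k)"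
        unfolding Q_def p_def by (rule sum_le_suminf[OF sQ]) (use rk[of k] in auto)
      also have "\<dots> \<le> u (c 0)" by (rule Qle[OF rk])
      finally show ?thesis .
    qed
    have "(\<lambda>k. \<Sum>n<N. p n * rk k ^ (2 * Suc n)) \<longlonglongrightarrow> (\<Sum>n<N. p n * 1 ^ (2 * Suc n))"
      by (intro tendsto_sum tendsto_mult tendsto_const tendsto_power rklim)
    hence "(\<Sum>n<N. p n * 1 ^ (2 * Suc n)) \<le> u (c 0)"
      by (rule LIMSEQ_le_const2) (use le in auto)
    thus ?thesis by simp
  qed
  have pnn: "0 \<le> p n" for n by (simp add: p_def)
  have sp: "summable p" by (rule summableI_nonneg_bounded[OF pnn partial])
  have Sle: "suminf p \<le> u (c 0)" by (rule suminf_le_const[OF sp partial])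
  define g where "g = (\<lambda>n. (cmod (c n))\<^sup>2)"
  have sg: "summable g"
    using sp summable_Suc_iff[of g] by (simp add: g_def p_def)
  define \<tau> where "\<tau> = (\<lambda>N. \<Sum>n. g (n + N))"
  have \<tau>lim: "\<tau> \<longlonglongrightarrow> 0" unfolding \<tau>_def by (rule suminf_exist_split2[OF sg])
  have key: "2 * pi * (u (c 0) - suminf p) \<le> (4 * pi * C) * \<tau> N" for N
  proof -
    define B where "B = (\<Sum>n<N. cmod (c n))"
    define K where "K = 2 * C * B\<^sup>2 + C"
    have K: "K > 0" using C(1) by (simp add: K_def add_nonneg_pos)
    define d where "d = (\<lambda>n. if n < N then 0 else c n)"
    have gd: "(cmod (d n))\<^sup>2 = (if n < N then 0 else g n)" for n by (simp add: d_def g_def)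
    have sd: "summable (\<lambda>n. (cmod (d n))\<^sup>2)"
      by (rule summable_comparison_test[OF _ sg]) (auto simp: gd g_def)
    have sd_eq: "(\<Sum>n. (cmod (d n))\<^sup>2) = \<tau> N"
      using suminf_split_initial_segment[OF sd, of N] by (simp add: gd \<tau>_def)
    have est: "2 * pi * (u (c 0) - suminf p) \<le>
        integral {0..2*pi} (\<lambda>\<theta>. min (u (f (of_real \<rho> * cis \<theta>))) K) + (4 * pi * C) * \<tau> N"
      if \<rho>: "0 \<le> \<rho>" "\<rho> < 1" for \<rho>
    proof -
      have smd: "summable (\<lambda>n. norm (d n) * \<rho> ^ n)"
        by (rule summable_comparison_test[OF _ smc[OF \<rho>]]) (use \<rho> in \<open>auto simp: d_def\<close>)
      note PT = ps_parseval[OF \<rho>(1) smd]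
      have Tle: "(\<Sum>n. (cmod (d n))\<^sup>2 * \<rho> ^ (2 * n)) \<le> \<tau> N"
      proof -
        have "(\<Sum>n. (cmod (d n))\<^sup>2 * \<rho> ^ (2 * n)) \<le> (\<Sum>n. (cmod (d n))\<^sup>2)"
        proof (rule suminf_le[OF _ PT(1) sd])
          fix n
          have "\<rho> ^ (2 * n) \<le> 1" using \<rho> by (simp add: power_le_one)
          thus "(cmod (d n))\<^sup>2 * \<rho> ^ (2 * n) \<le> (cmod (d n))\<^sup>2"
            by (simp add: mult_left_le)
        qed
        thus ?thesis using sd_eq by simp
      qed
      have pt: "u (f (of_real \<rho> * cis \<theta>)) \<le> min (u (f (of_real \<rho> * cis \<theta>))) K
          + 2 * C * (cmod (\<Sum>n. d n * (of_real \<rho> * cis \<theta>) ^ n))\<^sup>2" for \<theta>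
      proof -
        define z where "z = of_real \<rho> * cis \<theta>"
        have nz: "norm z = \<rho>" using \<rho> by (simp add: z_def norm_mult)
        have zb: "z \<in> ball 0 1" using nz \<rho> by simp
        define P where "P = (\<Sum>n<N. c n * z ^ n)"
        define T where "T = (\<Sum>n. d n * z ^ n)"
        have sc: "summable (\<lambda>n. c n * z ^ n)" using series[OF zb] by (simp add: sums_iff)
        have fz: "f z = (\<Sum>n. c n * z ^ n)" using series[OF zb] by (simp add: sums_iff)
        have sdz: "summable (\<lambda>n. d n * z ^ n)" by (rule ps_tail(1)[OF smd nz])
        have "(\<Sum>n. c n * z ^ n) = (\<Sum>n. c (n + N) * z ^ (n + N)) + P"
          using suminf_split_initial_segment[OF sc, of N] by (simp add: P_def)
        moreover have "T = (\<Sum>n. c (n + N) * z ^ (n + N))"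
          using suminf_split_initial_segment[OF sdz, of N] by (simp add: T_def d_def)
        ultimately have fTP: "f z = T + P" using fz by simp
        have PB: "cmod P \<le> B"
        proof -
          have "cmod P \<le> (\<Sum>n<N. norm (c n * z ^ n))" unfolding P_def by (rule norm_sum)
          also have "\<dots> \<le> (\<Sum>n<N. cmod (c n))"
          proof (rule sum_mono)
            fix n
            have "\<rho> ^ n \<le> 1" using \<rho> by (intro power_le_one) auto
            thus "norm (c n * z ^ n) \<le> cmod (c n)"
              by (simp add: norm_mult norm_power nz mult_left_le)
          qed
          finally show ?thesis by (simp add: B_def)
        qed
        have "cmod (f z) \<le> cmod T + B" using fTP PB norm_triangle_ineq[of T P] by simp
        hence "(cmod (f z))\<^sup>2 \<le> (cmod T + B)\<^sup>2" by (intro power_mono) auto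
        also have "\<dots> \<le> 2 * (cmod T)\<^sup>2 + 2 * B\<^sup>2"
          using sum_squares_ge_zero[of "cmod T - B" 0] by (simp add: power2_eq_square algebra_simps)
        finally have fzb: "(cmod (f z))\<^sup>2 \<le> 2 * (cmod T)\<^sup>2 + 2 * B\<^sup>2" .
        have wV: "f z \<in> V" using into zb by auto
        have "u (f z) \<le> C * (cmod (f z))\<^sup>2 + C" using C wV by blast
        also have "\<dots> \<le> C * (2 * (cmod T)\<^sup>2 + 2 * B\<^sup>2) + C"
          using fzb C(1) by (intro add_right_mono mult_left_mono) auto
        also have "\<dots> = K + 2 * C * (cmod T)\<^sup>2" by (simp add: K_def algebra_simps)
        finally have uK: "u (f z) \<le> K + 2 * C * (cmod T)\<^sup>2" .
        have "0 \<le> 2 * C * (cmod T)\<^sup>2" using C(1) by simp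
        hence "u (f z) \<le> min (u (f z)) K + 2 * C * (cmod T)\<^sup>2" using uK by (simp add: min_def)
        thus ?thesis by (simp add: z_def T_def)
      qed
      have Ip: "((\<lambda>\<theta>. min (u (f (of_real \<rho> * cis \<theta>))) K
          + 2 * C * (cmod (\<Sum>n. d n * (of_real \<rho> * cis \<theta>) ^ n))\<^sup>2) has_integral
          integral {0..2*pi} (\<lambda>\<theta>. min (u (f (of_real \<rho> * cis \<theta>))) K)
          + 2 * C * (2 * pi * (\<Sum>n. (cmod (d n))\<^sup>2 * \<rho> ^ (2 * n)))) {0..2*pi}"
      proof (rule has_integral_add)
        have "continuous_on {0..2*pi} (\<lambda>\<theta>. min (u (f (of_real \<rho> * cis \<theta>))) K)"
          by (intro continuous_on_min continuous_on_const cont_circ[OF u_cont contf into \<rho>])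
        thus "((\<lambda>\<theta>. min (u (f (of_real \<rho> * cis \<theta>))) K) has_integral
            integral {0..2*pi} (\<lambda>\<theta>. min (u (f (of_real \<rho> * cis \<theta>))) K)) {0..2*pi}"
          by (intro integrable_integral integrable_continuous_interval)
        show "((\<lambda>\<theta>. 2 * C * (cmod (\<Sum>n. d n * (of_real \<rho> * cis \<theta>) ^ n))\<^sup>2) has_integral
            2 * C * (2 * pi * (\<Sum>n. (cmod (d n))\<^sup>2 * \<rho> ^ (2 * n)))) {0..2*pi}"
          by (rule has_integral_mult_right[OF PT(2)])
      qed
      have "2 * pi * (u (c 0) - Q \<rho>) \<le> integral {0..2*pi} (\<lambda>\<theta>. min (u (f (of_real \<rho> * cis \<theta>))) K)
          + 2 * C * (2 * pi * (\<Sum>n. (cmod (d n))\<^sup>2 * \<rho> ^ (2 * n)))"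
        by (rule has_integral_le[OF K1[OF \<rho>] Ip]) (rule pt)
      moreover have "2 * C * (2 * pi * (\<Sum>n. (cmod (d n))\<^sup>2 * \<rho> ^ (2 * n))) \<le> (4 * pi * C) * \<tau> N"
      proof -
        have "2 * C * (2 * pi * (\<Sum>n. (cmod (d n))\<^sup>2 * \<rho> ^ (2 * n))) \<le> 2 * C * (2 * pi * \<tau> N)"
          using Tle C(1) by (intro mult_left_mono) auto
        thus ?thesis by (simp add: mult_ac)
      qed
      moreover have "Q \<rho> \<le> suminf p"
      proof -
        have sQ: "summable (\<lambda>n. (cmod (c (Suc n)))\<^sup>2 * \<rho> ^ (2 * Suc n))"
          using PS(2)[OF \<rho>] summable_Suc_iff[where f="\<lambda>n. (cmod (c n))\<^sup>2 * \<rho> ^ (2 * n)"] by simp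
        show ?thesis unfolding Q_def
        proof (rule suminf_le[OF _ sQ sp])
          fix n
          have "\<rho> ^ (2 * Suc n) \<le> 1" using \<rho> by (intro power_le_one) auto
          thus "(cmod (c (Suc n)))\<^sup>2 * \<rho> ^ (2 * Suc n) \<le> p n"
            by (simp add: p_def mult_left_le)
        qed
      qed
      moreover have "2 * pi * (u (c 0) - suminf p) \<le> 2 * pi * (u (c 0) - Q \<rho>)"
        using calculation(3) pi_gt_zero by (intro mult_left_mono) auto
      ultimately show ?thesis by linarith
    qed
    have dct: "(\<lambda>k. integral {0..2*pi} (\<lambda>\<theta>. min (u (f (of_real (rk k) * cis \<theta>))) K)) \<longlonglongrightarrow> 0"
      unfolding rk_def by (rule dct_part[OF U unn u_cont contf into K B_proper])
    have "(\<lambda>k. integral {0..2*pi} (\<lambda>\<theta>. min (u (f (of_real (rk k) * cis \<theta>))) K) + (4 * pi * C) * \<tau> N)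
        \<longlonglongrightarrow> 0 + (4 * pi * C) * \<tau> N"
      by (intro tendsto_add dct tendsto_const)
    hence "(\<lambda>k. integral {0..2*pi} (\<lambda>\<theta>. min (u (f (of_real (rk k) * cis \<theta>))) K) + (4 * pi * C) * \<tau> N)
        \<longlonglongrightarrow> (4 * pi * C) * \<tau> N" by simp
    thus ?thesis
      by (rule LIMSEQ_le_const[where a="2 * pi * (u (c 0) - suminf p)"]) (use est rk in auto)
  qed
  have "(\<lambda>N. (4 * pi * C) * \<tau> N) \<longlonglongrightarrow> 0" by (rule tendsto_mult_right_zero[OF \<tau>lim])
  hence "2 * pi * (u (c 0) - suminf p) \<le> 0"
    by (rule LIMSEQ_le_const) (use key in auto)
  hence lower: "u (c 0) \<le> suminf p" using pi_gt_zero by (simp add: mult_le_0_iff)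
  have "suminf p = u (c 0)" using Sle lower by simp
  thus ?thesis using sp by (simp add: p_def sums_iff)
qed

end
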